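(* For every integer $k \geq 1$, \[ \sum_{j=0}^{k} \binom{k}{j}\, \zeta(j-2k) \;=\; \frac{(-1)^k}{2\,(2k+1)\binom{2k}{k}}, \] where $\zeta$ denotes the Riemann zeta function (analytically continued to the negative integers).
   Context: $\zeta(s)$ is the Riemann zeta function; its values at non-positive integers are those of its meromorphic continuation (e.g. $\zeta(0)=-1/2$, $\zeta(-1)=-1/12$, $\zeta(-2m)=0$ for $m\ge 1$). *)

theory Defs
  imports "HOL-Complex_Analysis.Complex_Analysis"
begin

text \<open>The Riemann zeta function, defined (as in the paper) through its analytic
  continuation: for s \<noteq> 1, zeta s is the value at s of the (unique, by the identity
  theorem) function holomorphic on the complex plane minus {1} which agrees with the
  Dirichlet series sum over n \<ge> 1 of n^(-s) on the half-plane Re s > 1.\<close>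

definition riemann_zeta :: "complex \<Rightarrow> complex" where
  "riemann_zeta s =
     (THE z. \<exists>f. f holomorphic_on (- {1}) \<and>
                 (\<forall>w. 1 < Re w \<longrightarrow> f w = (\<Sum>n. (of_nat (Suc n)) powr (- w))) \<and>
                 f s = z)"

end

theory Submission
  imports Defs "HOL-Computational_Algebra.Polynomial"
begin

definition Z0 :: "complex \<Rightarrow> complex" where
  "Z0 s = (\<Sum>n. of_nat (n+2) powr (-s))"

lemma norm_nat_powr: "norm ((of_nat n :: complex) powr s) = real n powr Re s"
  by (subst norm_powr_real_powr) auto

lemma summable_real_shift2:
  assumes "r < -1"
  shows "summable (\<lambda>n. real (n+2) powr r)"
proof -
  have "summable (\<lambda>n. real n powr r)" using assms summable_real_powr_iff by blast
  then show ?thesis using summable_iff_shift[of "\<lambda>n. real n powr r" 2] by simp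
qed

lemma Z0_abs_summable:
  assumes "Re s > 1"
  shows "summable (\<lambda>n. norm ((of_nat (n+2) :: complex) powr (-s)))"
  unfolding norm_nat_powr using summable_real_shift2[of "Re (-s)"] assms by simp

definition Cz :: real where "Cz = (\<Sum>n. 4 / (real (n+2))^2)"

lemma summable_C0: "summable (\<lambda>n. 4 / (real (n+2))^2)"
proof -
  have "summable (\<lambda>n. real (n+2) powr (-2))" by (rule summable_real_shift2) simp
  moreover have "real (n+2) powr (-2) = 1 / (real (n+2))^2" for n
    by (simp add: powr_minus powr_numeral divide_inverse)
  ultimately have "summable (\<lambda>n. 1 / (real (n+2))^2)" by simp
  then have "summable (\<lambda>n. 4 * (1 / (real (n+2))^2))" by (rule summable_mult)
  then show ?thesis by simp
qed

lemma Z0_bound: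
  assumes "Re t \<ge> 2"
  shows "norm (Z0 t) \<le> Cz * 2 powr (- Re t)"
proof -
  have "norm (Z0 t) \<le> (\<Sum>n. norm ((of_nat (n+2) :: complex) powr (-t)))"
    unfolding Z0_def using Z0_abs_summable[of t] assms by (intro summable_norm) auto
  also have "\<dots> \<le> (\<Sum>n. 2 powr (- Re t) * (4 / (real (n+2))^2))"
  proof (rule suminf_le)
    fix n
    have "norm ((of_nat (n+2) :: complex) powr (-t)) = real (n+2) powr (- Re t)"
      using norm_nat_powr[of "n+2" "-t"] by simp
    also have "\<dots> = real (n+2) powr (-2) * real (n+2) powr (-(Re t - 2))"
      by (simp add: powr_add[symmetric])
    also have "\<dots> \<le> real (n+2) powr (-2) * 2 powr (-(Re t - 2))"
      using assms by (intro mult_left_mono powr_mono2') auto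
    also have "\<dots> = 2 powr (- Re t) * (4 / (real (n+2))^2)"
      by (simp add: powr_minus powr_numeral powr_diff divide_inverse powr_add)
    finally show "norm ((of_nat (n+2) :: complex) powr (-t)) \<le> 2 powr (- Re t) * (4 / (real (n+2))^2)" .
  next
    show "summable (\<lambda>n. norm ((of_nat (n+2) :: complex) powr (-t)))" using Z0_abs_summable[of t] assms by auto
    show "summable (\<lambda>n. 2 powr (- Re t) * (4 / (real (n+2))^2))" using summable_C0 by (rule summable_mult)
  qed
  also have "\<dots> = Cz * 2 powr (- Re t)"
    unfolding Cz_def using summable_C0 by (subst suminf_mult) auto
  finally show ?thesis .
qed

lemma Z0_holo: "Z0 holomorphic_on {s. Re s > 1}"
proof (rule holomorphic_uniform_sequence[where f = "\<lambda>k s. \<Sum>n<k. of_nat (n+2) powr (-s)"])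
  show "open {s. Re s > 1}" by (simp add: open_halfspace_Re_gt)
  show "(\<lambda>s. \<Sum>n<k. of_nat (n+2) powr (-s)) holomorphic_on {s. Re s > 1}" for k
    by (intro holomorphic_intros)
  fix x assume x: "x \<in> {s. Re s > 1}"
  define d where "d = (Re x - 1) / 2"
  have d: "d > 0" using x by (simp add: d_def)
  have sub: "cball x d \<subseteq> {s. Re s > 1}"
  proof
    fix s assume "s \<in> cball x d"
    then have "norm (x - s) \<le> d" by (simp add: dist_norm)
    then have "Re x - Re s \<le> d" using complex_Re_le_cmod[of "x - s"] by simp
    then show "s \<in> {s. Re s > 1}" using d by (simp add: d_def)
  qed
  have "uniform_limit (cball x d) (\<lambda>k s. \<Sum>n<k. of_nat (n+2) powr (-s)) (\<lambda>s. \<Sum>n. of_nat (n+2) powr (-s)) sequentially"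
  proof (rule Weierstrass_m_test)
    fix n s assume "s \<in> cball x d"
    then have "norm (x - s) \<le> d" by (simp add: dist_norm)
    then have "Re x - Re s \<le> d" using complex_Re_le_cmod[of "x - s"] by simp
    then have "Re s \<ge> 1 + d" unfolding d_def by (simp add: field_simps)
    then show "norm ((of_nat (n+2) :: complex) powr (-s)) \<le> real (n+2) powr (-(1+d))"
      using norm_nat_powr[of "n+2" "-s"] by (simp add: powr_mono)
  next
    show "summable (\<lambda>n. real (n+2) powr (-(1+d)))" using d by (intro summable_real_shift2) auto
  qed
  then show "\<exists>d>0. cball x d \<subseteq> {s. Re s > 1} \<and> uniform_limit (cball x d) (\<lambda>k s. \<Sum>n<k. of_nat (n+2) powr (-s)) Z0 sequentially"
    using d sub unfolding Z0_def by blast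
qed

definition qc :: "nat \<Rightarrow> complex \<Rightarrow> complex" where
  "qc m s = (-1)^m * (\<Prod>i<m+1. (1 - s - of_nat i)) / fact (m+2)"

lemma gchoose_summable_half:
  fixes a :: complex
  shows "summable (\<lambda>m. norm (a gchoose (m+1)) * (1/2)^m)"
proof -
  have "ereal (norm (1/2 :: complex)) < conv_radius (\<lambda>n. a gchoose n)"
    by (simp add: conv_radius_gchoose one_ereal_def)
  from abs_summable_in_conv_radius[OF this]
  have "summable (\<lambda>n. norm ((a gchoose n) * (1/2) ^ n))" .
  then have "summable (\<lambda>n. norm ((a gchoose (n+1)) * (1/2) ^ (n+1)))"
    using summable_iff_shift[of "\<lambda>n. norm ((a gchoose n) * (1/2::complex) ^ n)" 1] by simp
  then have "summable (\<lambda>n. 2 * norm ((a gchoose (n+1)) * (1/2) ^ (n+1)))" by (rule summable_mult)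
  moreover have "2 * norm ((a gchoose (n+1)) * (1/2::complex) ^ (n+1)) = norm (a gchoose (n+1)) * (1/2)^n" for n
    by (simp add: norm_mult norm_power norm_divide)
  ultimately show ?thesis by simp
qed

lemma aux_alg: "(P::complex) * (- t) / Fz * y = - (y * P / Fz * t)"
  by (cases "Fz = 0") (simp_all add: field_simps)

lemma C1:
  assumes s: "Re s > 1"
  shows "(s - 1) * Z0 s = 1 + (\<Sum>m. qc m s * ((s + of_nat m) * Z0 (s + of_nat m + 1)))"
proof -
  define a where "a = 1 - s"
  define g where "g m n = (a gchoose (m+1)) * (-1)^(m+1) * (of_nat (n+2) :: complex) powr (-(s + of_nat m))" for m n
  define c where "c m = (a gchoose (m+1)) * (-1)^(m+1)" for m
  define A where "A m = norm (a gchoose (m+1)) * (1/2::real)^m" for m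
  define B where "B n = real (n+2) powr (- Re s)" for n
  have sA: "summable A" unfolding A_def by (rule gchoose_summable_half)
  have sB: "summable B" unfolding B_def using s by (intro summable_real_shift2) auto
  have A0: "A m \<ge> 0" for m by (simp add: A_def)
  have B0: "B n \<ge> 0" for n by (simp add: B_def)
  have gbound: "norm (g m n) \<le> A m * B n" for m n
  proof -
    have e1: "norm (g m n) = norm (a gchoose (m+1)) * real (n+2) powr (- (Re s + real m))"
      unfolding g_def using norm_nat_powr[of "n+2" "-(s + of_nat m)"] by (simp add: norm_mult norm_power)
    have e2: "real (n+2) powr (- (Re s + real m)) = real (n+2) powr (- Re s) * real (n+2) powr (- real m)"
      by (simp add: powr_add[symmetric])
    have e3: "real (n+2) powr (- real m) \<le> (1/2::real)^m"
    proof -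
      have "real (n+2) powr (- real m) \<le> 2 powr (- real m)"
        by (intro powr_mono2') auto
      also have "2 powr (- real m) = (1/2::real)^m"
        by (simp add: powr_minus powr_realpow power_one_over inverse_eq_divide)
      finally show ?thesis .
    qed
    have "norm (g m n) = norm (a gchoose (m+1)) * real (n+2) powr (- Re s) * real (n+2) powr (- real m)"
      using e1 e2 by simp
    also have "\<dots> \<le> norm (a gchoose (m+1)) * real (n+2) powr (- Re s) * (1/2::real)^m"
      by (intro mult_left_mono e3) auto
    finally show ?thesis unfolding A_def B_def by (simp only: mult_ac)
  qed
  have inner_m: "(\<lambda>m. g m n) sums (of_nat (n+1) powr a - of_nat (n+2) powr a)" for n
  proof -
    define T where "T m = (a gchoose m) * (of_nat (n+2) :: complex) powr (a - of_nat m) * (-1) ^ m" for m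
    have "\<bar>-1::real\<bar> < \<bar>real (n+2)\<bar>" by simp
    from gen_binomial_complex''[OF this, of a]
    have "T sums of_nat (n+1) powr a"
      unfolding T_def by simp
    then have "(\<lambda>m. T (Suc m)) sums (of_nat (n+1) powr a - T 0)"
      using sums_Suc_iff[of T] by simp
    moreover have "T 0 = of_nat (n+2) powr a" unfolding T_def by simp
    moreover have "T (Suc m) = g m n" for m
    proof -
      have "a - of_nat (Suc m) = -(s + of_nat m)" unfolding a_def by simp
      then show ?thesis unfolding T_def g_def by (simp only: Suc_eq_plus1 mult_ac)
    qed
    ultimately show ?thesis by simp
  qed
  have inner_n: "(\<lambda>n. g m n) sums (c m * Z0 (s + of_nat m))" for m
  proof -
    have "summable (\<lambda>n. (of_nat (n+2) :: complex) powr (-(s + of_nat m)))"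
      by (rule summable_norm_cancel[OF Z0_abs_summable]) (use s in auto)
    then have "(\<lambda>n. c m * (of_nat (n+2) :: complex) powr (-(s + of_nat m))) sums (c m * Z0 (s + of_nat m))"
      unfolding Z0_def by (intro sums_mult summable_sums)
    then show ?thesis unfolding g_def c_def by (simp add: mult_ac)
  qed
  have hsum: "(\<lambda>(m,n). A m * B n) summable_on (UNIV \<times> UNIV)"
  proof (rule summable_on_SigmaI[where g = "\<lambda>m. A m * suminf B"])
    fix m :: nat
    have "(B has_sum suminf B) UNIV" using sB B0 by (intro sums_nonneg_imp_has_sum summable_sums) auto
    then show "((\<lambda>n. (\<lambda>(m,n). A m * B n) (m, n)) has_sum A m * suminf B) UNIV"
      using has_sum_cmult_right by auto
  next
    have "A summable_on UNIV" using sA A0 summable_on_UNIV_nonneg_real_iff by blast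
    then show "(\<lambda>m. A m * suminf B) summable_on UNIV" by (rule summable_on_cmult_left)
  next
    show "0 \<le> (\<lambda>(m,n). A m * B n) (m, n)" for m n using A0 B0 by simp
  qed
  have gsum: "(\<lambda>(m,n). g m n) summable_on (UNIV \<times> UNIV)"
  proof -
    have "(\<lambda>x. norm ((\<lambda>(m,n). g m n) x)) summable_on (UNIV \<times> UNIV)"
      by (rule Infinite_Sum.abs_summable_on_comparison_test'[OF hsum]) (auto simp: gbound)
    then show ?thesis by (rule Infinite_Sum.abs_summable_summable)
  qed
  have swap: "infsum (\<lambda>m. infsum (\<lambda>n. g m n) UNIV) UNIV = infsum (\<lambda>n. infsum (\<lambda>m. g m n) UNIV) UNIV"
    by (rule infsum_swap_banach[OF gsum])
  have normg_m: "summable (\<lambda>m. norm (g m n))" for n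
    by (rule summable_comparison_test[where g = "\<lambda>m. A m * B n"]) (auto intro!: summable_mult2 sA gbound)
  have normg_n: "summable (\<lambda>n. norm (g m n))" for m
    by (rule summable_comparison_test[where g = "\<lambda>n. A m * B n"]) (auto intro!: summable_mult sB gbound)
  have im: "infsum (\<lambda>m. g m n) UNIV = of_nat (n+1) powr a - of_nat (n+2) powr a" for n
    by (rule infsumI, rule norm_summable_imp_has_sum[OF normg_m inner_m])
  have in_: "infsum (\<lambda>n. g m n) UNIV = c m * Z0 (s + of_nat m)" for m
    by (rule infsumI, rule norm_summable_imp_has_sum[OF normg_n inner_n])
  have tel: "(\<lambda>n. (of_nat (n+1) :: complex) powr a - of_nat (n+2) powr a) sums 1"
  proof -
    have lim: "(\<lambda>n. (of_nat (n+1) :: complex) powr a) \<longlonglongrightarrow> 0"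
    proof (rule tendsto_norm_zero_cancel)
      have fl: "filterlim (\<lambda>n. real (Suc n)) at_top sequentially"
        using filterlim_real_sequentially filterlim_sequentially_Suc[of real at_top] by simp
      have "(\<lambda>n. real (Suc n) powr Re a) \<longlonglongrightarrow> 0"
        using s by (intro tendsto_neg_powr[OF _ fl]) (simp add: a_def)
      then have "(\<lambda>n. real (n+1) powr Re a) \<longlonglongrightarrow> 0" by simp
      then show "(\<lambda>n. norm ((of_nat (n+1) :: complex) powr a)) \<longlonglongrightarrow> 0"
        by (subst norm_nat_powr) 
    qed
    from telescope_sums'[OF lim] show ?thesis by simp
  qed
  have bound_n: "norm (of_nat (n+1) powr a - of_nat (n+2) powr a) \<le> suminf A * B n" for n
  proof -
    have "norm (of_nat (n+1) powr a - of_nat (n+2) powr a) = norm (\<Sum>m. g m n)"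
      using inner_m[of n] by (simp add: sums_iff)
    also have "\<dots> \<le> (\<Sum>m. norm (g m n))" by (rule summable_norm[OF normg_m])
    also have "\<dots> \<le> (\<Sum>m. A m * B n)"
      by (rule suminf_le) (auto intro!: summable_mult2 sA normg_m gbound)
    also have "\<dots> = suminf A * B n" using sA by (rule suminf_mult2[symmetric])
    finally show ?thesis .
  qed
  have rhs: "infsum (\<lambda>n. infsum (\<lambda>m. g m n) UNIV) UNIV = 1"
  proof -
    have "summable (\<lambda>n. norm ((of_nat (n+1) :: complex) powr a - of_nat (n+2) powr a))"
      by (rule summable_comparison_test[where g = "\<lambda>n. suminf A * B n"]) (use bound_n in \<open>auto intro!: summable_mult sB\<close>)
    from norm_summable_imp_has_sum[OF this tel] show ?thesis unfolding im by (rule infsumI)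
  qed
  have bound_m: "norm (c m * Z0 (s + of_nat m)) \<le> A m * suminf B" for m
  proof -
    have "norm (c m * Z0 (s + of_nat m)) = norm (\<Sum>n. g m n)"
      using inner_n[of m] by (simp add: sums_iff)
    also have "\<dots> \<le> (\<Sum>n. norm (g m n))" by (rule summable_norm[OF normg_n])
    also have "\<dots> \<le> (\<Sum>n. A m * B n)"
      by (rule suminf_le) (auto intro!: summable_mult sB normg_n gbound)
    also have "\<dots> = A m * suminf B" using suminf_mult[OF sB, of "A m"] by simp
    finally show ?thesis .
  qed
  have "summable (\<lambda>m. norm (c m * Z0 (s + of_nat m)))"
    by (rule summable_comparison_test[where g = "\<lambda>m. A m * suminf B"]) (auto intro!: summable_mult2 sA bound_m)
  then have "summable (\<lambda>m. c m * Z0 (s + of_nat m))" by (rule summable_norm_cancel)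
  then have "(\<lambda>m. c m * Z0 (s + of_nat m)) sums infsum (\<lambda>m. c m * Z0 (s + of_nat m)) UNIV"
    using \<open>summable (\<lambda>m. norm (c m * Z0 (s + of_nat m)))\<close>
    by (intro has_sum_imp_sums has_sum_infsum norm_summable_imp_summable_on)
  also have "infsum (\<lambda>m. c m * Z0 (s + of_nat m)) UNIV = 1"
    using swap rhs unfolding in_ by simp
  finally have S1: "(\<lambda>m. c m * Z0 (s + of_nat m)) sums 1" .
  then have S2: "(\<lambda>m. c (Suc m) * Z0 (s + of_nat (Suc m))) sums (1 - c 0 * Z0 s)"
    using sums_Suc_iff[of "\<lambda>m. c m * Z0 (s + of_nat m)" "1 - c 0 * Z0 s"] by simp
  have eq: "c (Suc m) * Z0 (s + of_nat (Suc m)) = - (qc m s * ((s + of_nat m) * Z0 (s + of_nat m + 1)))" for m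
  proof -
    have p: "(\<Prod>i=0..<m+2. a - of_nat i) = (\<Prod>i<m+1. (1 - s - of_nat i)) * (-(s + of_nat m))"
    proof -
      have "(\<Prod>i=0..<m+2. a - of_nat i) = (\<Prod>i<Suc (m+1). a - of_nat i)"
        by (simp add: atLeast0LessThan)
      also have "\<dots> = (\<Prod>i<m+1. a - of_nat i) * (a - of_nat (m+1))"
        by (rule prod.lessThan_Suc)
      also have "a - of_nat (m+1) = -(s + of_nat m)" by (simp add: a_def)
      finally show ?thesis by (simp add: a_def)
    qed
    have g2: "a gchoose (m+2) = (\<Prod>i<m+1. (1 - s - of_nat i)) * (-(s + of_nat m)) / fact (m+2)"
      unfolding gbinomial_prod_rev p by simp
    have "c (Suc m) = (a gchoose (m+2)) * (-1)^m"
      unfolding c_def by simp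
    also have "\<dots> = - (qc m s * (s + of_nat m))"
      unfolding g2 qc_def by (rule aux_alg)
    finally have "c (Suc m) = - (qc m s * (s + of_nat m))" .
    moreover have "s + of_nat (Suc m) = s + of_nat m + 1" by simp
    ultimately show ?thesis by (simp only: mult.assoc mult_minus_left)
  qed
  have c0: "c 0 = s - 1" by (simp add: c_def a_def)
  have "(\<lambda>m. c (Suc m) * Z0 (s + of_nat (Suc m))) = (\<lambda>m. - (qc m s * ((s + of_nat m) * Z0 (s + of_nat m + 1))))"
    by (rule ext) (rule eq)
  with S2 c0 have "(\<lambda>m. - (qc m s * ((s + of_nat m) * Z0 (s + of_nat m + 1)))) sums (1 - (s - 1) * Z0 s)"
    by simp
  then have "(\<lambda>m. - (- (qc m s * ((s + of_nat m) * Z0 (s + of_nat m + 1))))) sums (- (1 - (s - 1) * Z0 s))"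
    by (rule sums_minus)
  then have "(\<lambda>m. qc m s * ((s + of_nat m) * Z0 (s + of_nat m + 1))) sums ((s - 1) * Z0 s - 1)"
    by simp
  then show ?thesis by (simp add: sums_iff)
qed

definition Hs :: "nat \<Rightarrow> complex set" where "Hs N = {s. Re s > 1 - real N}"

fun Fz :: "nat \<Rightarrow> complex \<Rightarrow> complex" where
  "Fz 0 s = (s - 1) * Z0 s"
| "Fz (Suc N) s = 1 + (\<Sum>m. qc m s * Fz N (s + of_nat m + 1))"

lemma F_agree: "Re s > 1 \<Longrightarrow> Fz N s = Fz 0 s"
proof (induction N arbitrary: s)
  case 0 then show ?case by simp
next
  case (Suc N)
  have "Fz (Suc N) s = 1 + (\<Sum>m. qc m s * Fz 0 (s + of_nat m + 1))"
  proof -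
    have "Re (s + of_nat m + 1) > 1" for m using Suc.prems by simp
    then show ?thesis using Suc.IH by simp
  qed
  also have "\<dots> = 1 + (\<Sum>m. qc m s * ((s + of_nat m) * Z0 (s + of_nat m + 1)))"
    by simp
  also have "\<dots> = Fz 0 s" using C1[OF Suc.prems] by simp
  finally show ?case .
qed

definition bP :: "nat \<Rightarrow> nat \<Rightarrow> real" where
  "bP P n = (\<Prod>i<n. real P + real i) / fact n"

lemma bP_nonneg: "bP P n \<ge> 0"
  unfolding bP_def by (intro divide_nonneg_pos prod_nonneg) auto

lemma bP_summable: "summable (\<lambda>n. bP P n * (1/2)^n)"
proof (rule summable_ratio_test[where c = "3/4" and N = "2*P"])
  fix n assume n: "n \<ge> 2 * P"
  have "bP P (Suc n) * (1/2)^(Suc n) = (bP P n * (1/2)^n) * ((real P + real n) / (2 * (real n + 1)))"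
    unfolding bP_def by (simp add: field_simps)
  also have "\<dots> \<le> (bP P n * (1/2)^n) * (3/4)"
  proof (rule mult_left_mono)
    show "(real P + real n) / (2 * (real n + 1)) \<le> 3/4"
      using n by (simp add: field_simps)
    show "0 \<le> bP P n * (1/2)^n" using bP_nonneg by simp
  qed
  finally show "norm (bP P (Suc n) * (1/2)^(Suc n)) \<le> 3/4 * norm (bP P n * (1/2)^n)"
    using bP_nonneg by (simp add: abs_mult mult_ac)
qed simp

lemma powr_half: "(2::real) powr (- real n) = (1/2)^n"
  by (simp add: powr_minus powr_realpow power_one_over inverse_eq_divide)

lemma norm_fact_complex: "norm (fact n :: complex) = fact n"
  using norm_of_nat[of "fact n"] by (simp only: of_nat_fact)

lemma q_bound:
  assumes "norm s + 1 \<le> real P"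
  shows "norm (qc m s) * norm (s + of_nat m) \<le> bP P (m+2)"
proof -
  have "norm (qc m s) * norm (s + of_nat m) = (\<Prod>i<m+1. norm (1 - s - of_nat i)) * norm (s + of_nat m) / fact (m+2)"
    unfolding qc_def norm_divide norm_mult norm_fact_complex norm_power prod_norm by simp
  also have "\<dots> \<le> (\<Prod>i<m+1. real P + real i) * (real P + real (m+1)) / fact (m+2)"
  proof (intro divide_right_mono mult_mono prod_mono conjI)
    fix i assume "i \<in> {..<m+1}"
    have "norm (1 - s - of_nat i) \<le> 1 + norm s + real i"
      using norm_triangle_ineq4[of "1 - s" "of_nat i"] norm_triangle_ineq4[of 1 s] by simp
    then show "norm (1 - s - of_nat i) \<le> real P + real i" using assms by simp
  next
    have "norm (s + of_nat m) \<le> norm s + real m" using norm_triangle_ineq[of s "of_nat m"] by simp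
    then show "norm (s + of_nat m) \<le> real P + real (m+1)" using assms by simp
  qed (auto intro!: prod_nonneg mult_nonneg_nonneg)
  also have "\<dots> = bP P (m+2)"
    unfolding bP_def by (simp add: numeral_2_eq_2)
  finally show ?thesis .
qed

lemma C0_nonneg: "Cz \<ge> 0"
  unfolding Cz_def using summable_C0 by (intro suminf_nonneg) auto

lemma F_holo: "Fz N holomorphic_on Hs N"
proof (induction N)
  case 0
  have "(\<lambda>s. (s - 1) * Z0 s) holomorphic_on {s. Re s > 1}"
    by (intro holomorphic_intros Z0_holo)
  then show ?case by (simp add: Hs_def)
next
  case (Suc N)
  define G where "G s = (\<Sum>m. qc m s * Fz N (s + of_nat m + 1))" for s
  have qholo: "qc m holomorphic_on A" for m A unfolding qc_def[abs_def] by (intro holomorphic_intros) auto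
  have shift: "(\<lambda>s. Fz N (s + of_nat m + 1)) holomorphic_on Hs (Suc N)" for m
  proof -
    have "((Fz N) \<circ> (\<lambda>s. s + of_nat m + 1)) holomorphic_on Hs (Suc N)"
    proof (rule holomorphic_on_compose)
      show "(\<lambda>s. s + of_nat m + 1) holomorphic_on Hs (Suc N)" by (intro holomorphic_intros)
      have "(\<lambda>s. s + of_nat m + 1) ` Hs (Suc N) \<subseteq> Hs N" by (auto simp: Hs_def)
      then show "Fz N holomorphic_on (\<lambda>s. s + of_nat m + 1) ` Hs (Suc N)"
        using Suc.IH holomorphic_on_subset by blast
    qed
    then show ?thesis by (simp add: o_def)
  qed
  have "G holomorphic_on Hs (Suc N)"
  proof (rule holomorphic_uniform_sequence[where f = "\<lambda>k s. \<Sum>m<k. qc m s * Fz N (s + of_nat m + 1)"])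
    show "open (Hs (Suc N))" unfolding Hs_def by (rule open_halfspace_Re_gt)
    show "(\<lambda>s. \<Sum>m<k. qc m s * Fz N (s + of_nat m + 1)) holomorphic_on Hs (Suc N)" for k
      by (intro holomorphic_on_sum holomorphic_on_mult qholo shift)
    fix x assume x: "x \<in> Hs (Suc N)"
    define d where "d = (Re x + real N) / 2"
    have d: "d > 0" using x by (simp add: d_def Hs_def)
    have cb: "Re s \<ge> d - real N" "norm s \<le> norm x + d" if "s \<in> cball x d" for s
    proof -
      from that have "norm (x - s) \<le> d" by (simp add: dist_norm)
      then have "Re x - Re s \<le> d" using complex_Re_le_cmod[of "x - s"] by simp
      then show "Re s \<ge> d - real N" unfolding d_def by (simp add: field_simps)
      show "norm s \<le> norm x + d" using \<open>norm (x - s) \<le> d\<close> norm_triangle_ineq2[of s x]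
        by (simp add: norm_minus_commute)
    qed
    have sub: "cball x d \<subseteq> Hs (Suc N)"
    proof
      fix s assume "s \<in> cball x d"
      then show "s \<in> Hs (Suc N)" using cb(1)[of s] d by (simp add: Hs_def)
    qed
    define P where "P = nat \<lceil>norm x + d\<rceil> + 1"
    have P: "norm s + 1 \<le> real P" if "s \<in> cball x d" for s
      using cb(2)[OF that] unfolding P_def by linarith
    define M where "M m = Cz * 2 powr (real N + 1) * (bP P (m+2) * (1/2)^(m+2))" for m
    have "uniform_limit (cball x d) (\<lambda>k s. \<Sum>m<k. qc m s * Fz N (s + of_nat m + 1)) G sequentially"
      unfolding G_def
    proof (rule Weierstrass_m_test_ev)
      show "summable M"
      proof -
        have "summable (\<lambda>m. bP P (m+2) * (1/2)^(m+2))"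
          using bP_summable[of P] summable_iff_shift[of "\<lambda>n. bP P n * (1/2)^n" 2] by simp
        then show ?thesis unfolding M_def by (rule summable_mult)
      qed
      show "\<forall>\<^sub>F m in sequentially. \<forall>s\<in>cball x d. norm (qc m s * Fz N (s + of_nat m + 1)) \<le> M m"
        unfolding eventually_sequentially
      proof (intro exI[of _ "N+1"] allI impI ballI)
        fix m s assume m: "m \<ge> N + 1" and s: "s \<in> cball x d"
        have Re_t: "Re (s + of_nat m + 1) \<ge> 2" "Re (s + of_nat m + 1) \<ge> real m + 1 - real N"
          using cb(1)[OF s] m d by auto
        have FN: "Fz N (s + of_nat m + 1) = (s + of_nat m) * Z0 (s + of_nat m + 1)"
          using F_agree[of "s + of_nat m + 1" N] Re_t by simp
        have "norm (qc m s * Fz N (s + of_nat m + 1)) = (norm (qc m s) * norm (s + of_nat m)) * norm (Z0 (s + of_nat m + 1))"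
          unfolding FN by (simp add: norm_mult mult_ac)
        also have "\<dots> \<le> bP P (m+2) * (Cz * 2 powr (- Re (s + of_nat m + 1)))"
          by (intro mult_mono q_bound P s Z0_bound Re_t) (auto simp: bP_nonneg)
        also have "2 powr (- Re (s + of_nat m + 1)) \<le> 2 powr (real N + 1) * (1/2)^(m+2)"
        proof -
          have "2 powr (- Re (s + of_nat m + 1)) \<le> 2 powr (real N - real m - 1)"
            using Re_t(2) by (intro powr_mono) auto
          also have "\<dots> = 2 powr (real N + 1) * 2 powr (- real (m+2))"
            by (simp add: powr_add[symmetric])
          also have "2 powr (- real (m+2)) = (1/2::real)^(m+2)"
            by (rule powr_half)
          finally show ?thesis .
        qed
        then have "bP P (m+2) * (Cz * 2 powr (- Re (s + of_nat m + 1))) \<le> bP P (m+2) * (Cz * (2 powr (real N + 1) * (1/2)^(m+2)))"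
          by (intro mult_left_mono C0_nonneg bP_nonneg)
        also have "\<dots> = M m" unfolding M_def by (simp add: mult_ac)
        finally show "norm (qc m s * Fz N (s + of_nat m + 1)) \<le> M m" .
      qed
    qed
    then show "\<exists>d>0. cball x d \<subseteq> Hs (Suc N) \<and> uniform_limit (cball x d) (\<lambda>k s. \<Sum>m<k. qc m s * Fz N (s + of_nat m + 1)) G sequentially"
      using d sub by blast
  qed
  then have "(\<lambda>s. 1 + G s) holomorphic_on Hs (Suc N)" by (intro holomorphic_intros)
  then show ?case by (simp add: G_def[abs_def])
qed

lemma H_mono: "N \<le> M \<Longrightarrow> Hs N \<subseteq> Hs M"
  by (auto simp: Hs_def)

lemma F_Suc_eq: "s \<in> Hs N \<Longrightarrow> Fz (Suc N) s = Fz N s"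
proof -
  assume s: "s \<in> Hs N"
  show ?thesis
  proof (rule analytic_continuation_open[where s = "{s. Re s > 1}" and s' = "Hs N" and f = "Fz (Suc N)" and g = "Fz N" and z = s])
    show "open {s. Re s > 1}" by (rule open_halfspace_Re_gt)
    show "open (Hs N)" unfolding Hs_def by (rule open_halfspace_Re_gt)
    show "{s. Re s > 1} \<noteq> {}" by (auto intro!: exI[of _ 2])
    show "connected (Hs N)" unfolding Hs_def by auto
    show "{s. Re s > 1} \<subseteq> Hs N" by (auto simp: Hs_def)
    show "Fz (Suc N) holomorphic_on Hs N" using F_holo[of "Suc N"] H_mono[of N "Suc N"] holomorphic_on_subset by auto
    show "Fz N holomorphic_on Hs N" by (rule F_holo)
    show "Fz (Suc N) z = Fz N z" if "z \<in> {s. Re s > 1}" for z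
      using F_agree[of z "Suc N"] F_agree[of z N] that by simp
  qed (rule s)
qed

lemma F_mono_eq: "s \<in> Hs N \<Longrightarrow> N \<le> M \<Longrightarrow> Fz M s = Fz N s"
proof (induction M)
  case 0 then show ?case by simp
next
  case (Suc M)
  show ?case
  proof (cases "N = Suc M")
    case False
    then have "N \<le> M" using Suc.prems by simp
    then have "s \<in> Hs M" using Suc.prems H_mono by blast
    then show ?thesis using F_Suc_eq[of s M] Suc by (simp add: \<open>N \<le> M\<close>)
  qed simp
qed

lemma F_eq: "s \<in> Hs N \<Longrightarrow> s \<in> Hs M \<Longrightarrow> Fz M s = Fz N s"
  by (metis F_mono_eq nle_le)

definition Nsel :: "complex \<Rightarrow> nat" where "Nsel s = nat \<lceil>1 - Re s\<rceil> + 1"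

lemma in_H_Nsel: "s \<in> Hs (Nsel s)"
  unfolding Hs_def Nsel_def by simp linarith

definition GG :: "complex \<Rightarrow> complex" where "GG s = Fz (Nsel s) s"

lemma GG_eq: "s \<in> Hs N \<Longrightarrow> GG s = Fz N s"
  unfolding GG_def using F_eq in_H_Nsel by blast

lemma GG_holo: "GG holomorphic_on UNIV"
proof -
  have "\<exists>f'. (GG has_field_derivative f') (at z)" for z
  proof -
    define N0 where "N0 = nat \<lceil>1 - Re z\<rceil> + 2"
    define V where "V = {s. Re s > Re z - 1}"
    have V: "open V" "z \<in> V" unfolding V_def by (rule open_halfspace_Re_gt) simp
    have VH: "V \<subseteq> Hs N0" unfolding V_def Hs_def N0_def by auto linarith
    have "Fz N0 holomorphic_on V" using F_holo[of N0] VH holomorphic_on_subset by blast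
    moreover have "\<And>x. x \<in> V \<Longrightarrow> Fz N0 x = GG x" using VH GG_eq by auto
    ultimately have "GG holomorphic_on V"
      by (rule holomorphic_transform)
    then have "\<forall>x\<in>V. \<exists>f'. (GG has_field_derivative f') (at x)"
      using holomorphic_on_open[OF V(1)] by simp
    then show ?thesis using V(2) by blast
  qed
  then show ?thesis using holomorphic_on_open[OF open_UNIV] by simp
qed

definition zf :: "complex \<Rightarrow> complex" where "zf s = 1 + GG s / (s - 1)"

lemma zf_holo: "zf holomorphic_on (- {1})"
  unfolding zf_def[abs_def]
  by (intro holomorphic_intros holomorphic_on_subset[OF GG_holo]) auto

lemma dirichlet_eq: "Re w > 1 \<Longrightarrow> (\<Sum>n. (of_nat (Suc n) :: complex) powr (- w)) = 1 + Z0 w"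
proof -
  assume w: "Re w > 1"
  have "summable (\<lambda>n. (of_nat (n+2) :: complex) powr (- w))"
    by (rule summable_norm_cancel[OF Z0_abs_summable]) (use w in auto)
  then have "(\<lambda>n. (of_nat (Suc (Suc n)) :: complex) powr (- w)) sums Z0 w"
    unfolding Z0_def by (simp add: summable_sums numeral_2_eq_2)
  then have "(\<lambda>n. (of_nat (Suc n) :: complex) powr (- w)) sums (Z0 w + 1)"
    using sums_Suc_iff[of "\<lambda>n. (of_nat (Suc n) :: complex) powr (- w)" "Z0 w"] by simp
  then show ?thesis by (simp add: sums_iff add.commute)
qed

lemma zf_agree: "Re w > 1 \<Longrightarrow> zf w = (\<Sum>n. (of_nat (Suc n) :: complex) powr (- w))"
proof -
  assume w: "Re w > 1"
  then have "w \<in> Hs 0" by (simp add: Hs_def)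
  then have "GG w = (w - 1) * Z0 w" using GG_eq[of w 0] by simp
  moreover have "w \<noteq> 1" using w by auto
  ultimately show ?thesis unfolding zf_def using dirichlet_eq[OF w] by simp
qed

lemma riemann_zeta_eq: "s \<noteq> 1 \<Longrightarrow> riemann_zeta s = zf s"
proof -
  assume s1: "s \<noteq> 1"
  let ?P = "\<lambda>z. \<exists>f. f holomorphic_on (- {1}) \<and>
                 (\<forall>w. 1 < Re w \<longrightarrow> f w = (\<Sum>n. (of_nat (Suc n)) powr (- w))) \<and> f s = z"
  show ?thesis unfolding riemann_zeta_def
  proof (rule the_equality)
    show "?P (zf s)" using zf_holo zf_agree by blast
  next
    fix z assume "?P z"
    then obtain f where f: "f holomorphic_on (- {1})" "\<forall>w. 1 < Re w \<longrightarrow> f w = (\<Sum>n. (of_nat (Suc n)) powr (- w))" "f s = z"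
      by blast
    have "f s = zf s"
    proof (rule analytic_continuation_open[where s = "{s. Re s > 1}" and s' = "- {1}" and f = f and g = zf and z = s])
      show "open {s. Re s > 1}" by (rule open_halfspace_Re_gt)
      show "open (- {1::complex})" by auto
      show "{s. Re s > 1} \<noteq> {}" by (auto intro!: exI[of _ 2])
      show "connected (- {1::complex})" by (rule connected_punctured_universe) simp
      show "{s. Re s > 1} \<subseteq> - {1}" by auto
      show "f holomorphic_on - {1}" by (rule f(1))
      show "zf holomorphic_on - {1}" by (rule zf_holo)
      show "f w = zf w" if "w \<in> {s. Re s > 1}" for w using f(2) zf_agree that by simp
    qed (use s1 in auto)
    then show "z = zf s" using f(3) by simp
  qed
qed

lemma q_zero: "M < m \<Longrightarrow> qc m (- of_nat M) = 0"
proof -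
  assume "M < m"
  then have "(\<Prod>i<m+1. (1 - (- of_nat M) - of_nat i :: complex)) = 0"
    by (intro prod_zero) (auto intro!: bexI[of _ "M+1"])
  then show ?thesis unfolding qc_def by simp
qed

lemma q_one: "qc m 1 = 0"
proof -
  have "(\<Prod>i<m+1. (1 - 1 - of_nat i :: complex)) = 0"
    by (intro prod_zero) (auto intro!: bexI[of _ 0])
  then show ?thesis unfolding qc_def by simp
qed

lemma GG_one: "GG 1 = 1"
proof -
  have "(1::complex) \<in> Hs 1" by (simp add: Hs_def)
  then have "GG 1 = Fz 1 1" by (rule GG_eq)
  also have "\<dots> = 1" by (simp add: q_one)
  finally show ?thesis .
qed

lemma GG_rec: "GG (- of_nat M) = 1 + (\<Sum>m<M+1. qc m (- of_nat M) * GG (- of_nat M + of_nat m + 1))"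
proof -
  have "(- of_nat M :: complex) \<in> Hs (Suc (M+1))" by (simp add: Hs_def)
  then have "GG (- of_nat M) = Fz (Suc (M+1)) (- of_nat M)" by (rule GG_eq)
  also have "\<dots> = 1 + (\<Sum>m. qc m (- of_nat M) * Fz (M+1) (- of_nat M + of_nat m + 1))" by simp
  also have "(\<Sum>m. qc m (- of_nat M) * Fz (M+1) (- of_nat M + of_nat m + 1)) =
             (\<Sum>m<M+1. qc m (- of_nat M) * Fz (M+1) (- of_nat M + of_nat m + 1))"
    by (rule suminf_finite) (auto simp: q_zero)
  also have "\<dots> = (\<Sum>m<M+1. qc m (- of_nat M) * GG (- of_nat M + of_nat m + 1))"
  proof (rule sum.cong)
    fix m assume "m \<in> {..<M+1}"
    have "(- of_nat M + of_nat m + 1 :: complex) \<in> Hs (M+1)" by (simp add: Hs_def)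
    then show "qc m (- of_nat M) * Fz (M+1) (- of_nat M + of_nat m + 1) = qc m (- of_nat M) * GG (- of_nat M + of_nat m + 1)"
      using GG_eq by simp
  qed simp
  finally show ?thesis .
qed

definition zz :: "nat \<Rightarrow> complex" where "zz n = zf (- of_nat n)"

lemma GG_neg: "GG (- of_nat n) = - (of_nat n + 1) * (zz n - 1)"
proof -
  have "(- of_nat n - 1 :: complex) \<noteq> 0"
    by (metis add_eq_0_iff diff_minus_eq_add minus_diff_eq of_nat_Suc of_nat_neq_0 add.commute)
  then show ?thesis unfolding zz_def zf_def by (simp add: field_simps)
qed

lemma q_last: "qc M (- of_nat M) = (-1)^M / (of_nat M + 2)"
proof -
  have "(\<Prod>i<M+1. (1 - (- of_nat M) - of_nat i :: complex)) = (\<Prod>i<M+1. of_nat (M + 1 - i))"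
    by (rule prod.cong) (auto simp: of_nat_diff)
  also have "\<dots> = of_nat (\<Prod>i<M+1. (M + 1 - i))" by simp
  also have "(\<Prod>i<M+1. (M + 1 - i)) = fact (M+1)"
    unfolding fact_prod_rev[of "M+1"] atLeast0LessThan by simp
  finally have p: "(\<Prod>i<M+1. (1 - (- of_nat M) - of_nat i :: complex)) = fact (M+1)" by (simp only: of_nat_fact)
  have f2: "fact (M+2) = (of_nat M + 2) * (fact (M+1) :: complex)"
    by (simp add: numeral_2_eq_2 fact_Suc)
  have "qc M (- of_nat M) = (-1)^M * fact (M+1) / ((of_nat M + 2) * fact (M+1))"
    unfolding qc_def p f2 by (simp only: Suc_eq_plus1)
  also have "\<dots> = (-1)^M / (of_nat M + 2)"
    by (rule mult_divide_mult_cancel_right[where b = "of_nat M + 2"]) (use of_nat_neq_0[of M, where 'a=complex] in simp)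
  finally show ?thesis .
qed

lemma q_mid: "m < M \<Longrightarrow> qc m (- of_nat M) * (- of_nat (M - m)) = - ((-1)^m * of_nat (Suc M choose (m+2)))"
proof -
  assume m: "m < M"
  have "(\<Prod>i<m+1. (1 - (- of_nat M) - of_nat i :: complex)) * of_nat (M - m) = (\<Prod>i<m+2. (of_nat (Suc M) - of_nat i))"
  proof -
    have "(\<Prod>i<m+2. (of_nat (Suc M) - of_nat i :: complex)) = (\<Prod>i<Suc (m+1). (of_nat (Suc M) - of_nat i))"
      by simp
    also have "\<dots> = (\<Prod>i<m+1. (of_nat (Suc M) - of_nat i)) * (of_nat (Suc M) - of_nat (m+1))"
      by (rule prod.lessThan_Suc)
    also have "of_nat (Suc M) - of_nat (m+1) = (of_nat (M - m) :: complex)" using m by (simp add: of_nat_diff)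
    finally show ?thesis by (simp add: algebra_simps)
  qed
  moreover have "(\<Prod>i<m+2. (of_nat (Suc M) - of_nat i :: complex)) / fact (m+2) = of_nat (Suc M choose (m+2))"
    unfolding binomial_gbinomial gbinomial_prod_rev by (simp add: atLeast0LessThan)
  ultimately show ?thesis unfolding qc_def
    by (metis (no_types, lifting) mult_minus_right times_divide_eq_left mult.assoc mult.commute)
qed

lemma alg2:
  fixes sg E m z t :: complex
  assumes "sg * sg = 1" "- (m + 1) * (z - 1) = 1 + sg * (E - - sg * m) + sg / t"
  shows "E = - sg * (m + 1) * z - 1 / t"
proof -
  define u where "u = 1 / t"
  have "sg / t = sg * u" by (simp add: u_def)
  then have h: "- (m + 1) * (z - 1) = 1 + sg * (E - - sg * m) + sg * u" using assms(2) by simp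
  have "E = - sg * (m + 1) * z - u" using h assms(1) by algebra
  then show ?thesis by (simp add: u_def)
qed

lemma S_rel: "(\<Sum>i<Suc M. (-1)^i * of_nat (Suc M choose i) * zz i) = -1 / (of_nat M + 2)"
proof -
  define sg :: complex where "sg = (-1)^M"
  have sg2: "sg * sg = 1" unfolding sg_def by (simp add: power_mult_distrib[symmetric])
  define C where "C i = (of_nat (Suc M choose i) :: complex)" for i
  define E where "E = (\<Sum>i<M. (-1)^i * C i * zz i)"
  define S0 where "S0 = (\<Sum>i<M. (-1)^i * C i)"
  have rec: "GG (- of_nat M) = 1 + (\<Sum>m<M. qc m (- of_nat M) * GG (- of_nat M + of_nat m + 1)) + qc M (- of_nat M) * GG (- of_nat M + of_nat M + 1)"
    using GG_rec[of M] by simp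
  have last: "qc M (- of_nat M) * GG (- of_nat M + of_nat M + 1) = sg / (of_nat M + 2)"
    using GG_one q_last[of M] by (simp add: sg_def)
  define h where "h i = sg * ((-1)^i * C i * (zz i - 1))" for i
  have tm: "qc m (- of_nat M) * GG (- of_nat M + of_nat m + 1) = h (M - Suc m)" if m: "m < M" for m
  proof -
    have a1: "(- of_nat M + of_nat m + 1 :: complex) = - of_nat (M - Suc m)" using m by (simp add: of_nat_diff)
    have a2: "(of_nat (M - Suc m) + 1 :: complex) = of_nat (M - m)" using m by (simp add: of_nat_diff)
    have "qc m (- of_nat M) * GG (- of_nat M + of_nat m + 1) = qc m (- of_nat M) * (- of_nat (M - m)) * (zz (M - Suc m) - 1)"
      unfolding a1 GG_neg a2 by (simp add: mult_ac)
    also have "\<dots> = - ((-1)^m * of_nat (Suc M choose (m+2))) * (zz (M - Suc m) - 1)"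
      using q_mid[OF m] by simp
    also have "Suc M choose (m+2) = Suc M choose (M - Suc m)"
    proof -
      have "Suc M choose (m+2) = Suc M choose (Suc M - (m+2))" using m by (intro binomial_symmetric) simp
      also have "Suc M - (m+2) = M - Suc m" by simp
      finally show ?thesis .
    qed
    also have "(-1::complex)^m = - sg * (-1)^(M - Suc m)"
    proof -
      have "M = (M - Suc m) + m + 1" using m by simp
      then have "sg = (-1)^(M - Suc m) * (-1)^m * (-1)" unfolding sg_def by (metis power_add power_one_right)
      then have "- sg * (-1)^(M - Suc m) = ((-1)^(M - Suc m) * (-1)^(M - Suc m)) * (-1::complex)^m" by (simp add: mult_ac)
      also have "(-1::complex)^(M - Suc m) * (-1)^(M - Suc m) = 1" by (simp add: power_mult_distrib[symmetric])
      finally show ?thesis by simp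
    qed
    finally show ?thesis unfolding h_def C_def by (simp add: mult_ac)
  qed
  have "(\<Sum>m<M. qc m (- of_nat M) * GG (- of_nat M + of_nat m + 1)) = (\<Sum>m<M. h (M - Suc m))"
    by (rule sum.cong) (simp_all only: tm lessThan_iff)
  also have "\<dots> = (\<Sum>i<M. h i)" by (rule sum.nat_diff_reindex)
  also have "\<dots> = sg * (E - S0)"
    unfolding h_def E_def S0_def by (simp add: sum_distrib_left sum_subtractf algebra_simps)
  finally have mid: "(\<Sum>m<M. qc m (- of_nat M) * GG (- of_nat M + of_nat m + 1)) = sg * (E - S0)" .
  have S0v: "S0 = - sg * of_nat M"
  proof -
    have "(\<Sum>i\<le>Suc M. (-1)^i * C i) = 0" unfolding C_def by (rule choose_alternating_sum) simp
    moreover have "(\<Sum>i\<le>Suc M. (-1)^i * C i) = S0 + (-1)^M * C M + (-1)^(Suc M) * C (Suc M)"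
      unfolding S0_def by (simp add: lessThan_Suc_atMost[symmetric])
    moreover have "C M = of_nat M + 1" "C (Suc M) = 1" unfolding C_def by simp_all
    ultimately show ?thesis unfolding sg_def by (simp add: algebra_simps eq_neg_iff_add_eq_0)
  qed
  have main: "- (of_nat M + 1) * (zz M - 1) = 1 + sg * (E - S0) + sg / (of_nat M + 2)"
    using rec last mid GG_neg[of M] by simp
  have Ev: "E = - sg * (of_nat M + 1) * zz M - 1 / (of_nat M + 2)"
    using alg2[OF sg2 main[unfolded S0v]] .
  have "(\<Sum>i<Suc M. (-1)^i * of_nat (Suc M choose i) * zz i) = E + sg * (of_nat M + 1) * zz M"
    unfolding E_def C_def sg_def by simp
  also have "\<dots> = -1 / (of_nat M + 2)" unfolding Ev by (simp add: algebra_simps)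
  finally show ?thesis .
qed

definition Lw :: "(nat \<Rightarrow> complex) \<Rightarrow> complex poly \<Rightarrow> complex" where
  "Lw w p = (\<Sum>i\<le>degree p. coeff p i * w i)"

lemma Lw_bound: "degree p \<le> n \<Longrightarrow> Lw w p = (\<Sum>i\<le>n. coeff p i * w i)"
  unfolding Lw_def
  by (rule sum.mono_neutral_left) (auto simp: coeff_eq_0)

lemma Lw_0 [simp]: "Lw w 0 = 0" by (simp add: Lw_def)

lemma Lw_add: "Lw w (p + q) = Lw w p + Lw w q"
proof -
  define n where "n = max (degree p) (degree q)"
  have "degree (p + q) \<le> n" unfolding n_def by (rule degree_add_le) auto
  then have "Lw w (p + q) = (\<Sum>i\<le>n. coeff (p + q) i * w i)" by (rule Lw_bound)
  also have "\<dots> = (\<Sum>i\<le>n. coeff p i * w i) + (\<Sum>i\<le>n. coeff q i * w i)"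
    by (simp add: sum.distrib algebra_simps)
  also have "\<dots> = Lw w p + Lw w q"
    by (subst (1 2) Lw_bound[symmetric]) (auto simp: n_def)
  finally show ?thesis .
qed

lemma Lw_smult: "Lw w (smult c p) = c * Lw w p"
proof -
  have "Lw w (smult c p) = (\<Sum>i\<le>degree p. coeff (smult c p) i * w i)"
    by (rule Lw_bound) (rule degree_smult_le)
  then show ?thesis unfolding Lw_def by (simp add: sum_distrib_left mult_ac)
qed

lemma Lw_sum: "Lw w (\<Sum>i\<in>A. f i) = (\<Sum>i\<in>A. Lw w (f i))"
  by (induction A rule: infinite_finite_induct) (simp_all add: Lw_add)

lemma Lw_monom: "Lw w (monom c n) = c * w n"
proof -
  have "Lw w (monom c n) = (\<Sum>i\<le>n. coeff (monom c n) i * w i)"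
    by (rule Lw_bound) (simp add: degree_monom_le)
  also have "\<dots> = (\<Sum>i\<le>n. if i = n then c * w i else 0)"
    by (rule sum.cong) (auto simp: coeff_monom)
  also have "\<dots> = c * w n" by simp
  finally show ?thesis .
qed

lemma lin_pow_expand: "[:a, 1:] ^ n = (\<Sum>k\<le>n. monom (of_nat (n choose k) * a ^ (n - k)) k)"
proof -
  have "[:a, 1:] = monom 1 1 + [:a:]" by (simp add: monom_altdef)
  then have "[:a, 1:] ^ n = (monom 1 1 + [:a:]) ^ n" by simp
  also have "\<dots> = (\<Sum>k\<le>n. of_nat (n choose k) * monom 1 1 ^ k * [:a:] ^ (n - k))"
    by (rule binomial_ring)
  also have "\<dots> = (\<Sum>k\<le>n. monom (of_nat (n choose k) * a ^ (n - k)) k)"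
  proof (rule sum.cong)
    fix k
    have "of_nat (n choose k) * monom 1 1 ^ k * [:a:] ^ (n - k) = smult (of_nat (n choose k) * a ^ (n - k)) (monom 1 k)"
      by (simp add: monom_power poly_const_pow of_nat_poly smult_monom mult_ac)
    then show "of_nat (n choose k) * monom 1 1 ^ k * [:a:] ^ (n - k) = monom (of_nat (n choose k) * a ^ (n - k)) k"
      by (simp add: smult_monom)
  qed simp
  finally show ?thesis .
qed

lemma pcompose_pow: "pcompose (p ^ n) r = (pcompose p r) ^ n"
  by (induction n) (simp_all add: pcompose_mult pcompose_1)

lemma pf:
  fixes x :: complex
  assumes "\<forall>j. x + of_nat j \<noteq> 0"
  shows "(\<Sum>j\<le>k. of_nat (k choose j) * (-1)^j / (x + of_nat j)) = fact k / (\<Prod>i\<le>k. (x + of_nat i))"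
  using assms
proof (induction k arbitrary: x)
  case 0 then show ?case by simp
next
  case (Suc k)
  define f where "f y = (\<Sum>j\<le>k. of_nat (k choose j) * (-1)^j / (y + of_nat j))" for y :: complex
  have x0: "x \<noteq> 0" using Suc.prems by (metis add.right_neutral of_nat_0)
  have x1: "\<forall>j. x + 1 + of_nat j \<noteq> 0" using Suc.prems by (metis add.assoc of_nat_Suc add.commute)
  have "(\<Sum>j\<le>Suc k. of_nat (Suc k choose j) * (-1)^j / (x + of_nat j)) =
        1 / x + (\<Sum>j\<le>k. of_nat (Suc k choose Suc j) * (-1)^(Suc j) / (x + of_nat (Suc j)))"
    by (subst sum.atMost_Suc_shift) simp
  also have "(\<Sum>j\<le>k. of_nat (Suc k choose Suc j) * (-1)^(Suc j) / (x + of_nat (Suc j))) =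
     (\<Sum>j\<le>k. of_nat (k choose j) * (-1)^(Suc j) / (x + 1 + of_nat j)) +
     (\<Sum>j\<le>k. of_nat (k choose Suc j) * (-1)^(Suc j) / (x + of_nat (Suc j)))"
    unfolding sum.distrib[symmetric]
    by (rule sum.cong) (simp_all add: distrib_right add_divide_distrib diff_divide_distrib add_ac)
  also have "(\<Sum>j\<le>k. of_nat (k choose j) * (-1)^(Suc j) / (x + 1 + of_nat j)) = - f (x + 1)"
    unfolding f_def by (simp add: sum_negf[symmetric])
  also have "(\<Sum>j\<le>k. of_nat (k choose Suc j) * (-1)^(Suc j) / (x + of_nat (Suc j))) = f x - 1 / x"
  proof -
    have "f x = (\<Sum>j\<le>Suc k. of_nat (k choose j) * (-1)^j / (x + of_nat j))"
      unfolding f_def by simp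
    also have "\<dots> = 1 / x + (\<Sum>j\<le>k. of_nat (k choose Suc j) * (-1)^(Suc j) / (x + of_nat (Suc j)))"
      by (subst sum.atMost_Suc_shift) simp
    finally show ?thesis by simp
  qed
  finally have L: "(\<Sum>j\<le>Suc k. of_nat (Suc k choose j) * (-1)^j / (x + of_nat j)) = f x - f (x + 1)"
    by simp
  define A where "A = (\<Prod>i\<le>k. (x + 1 + of_nat i))"
  define B where "B = (\<Prod>i\<le>k. (x + of_nat i))"
  have A0: "A \<noteq> 0" unfolding A_def using x1 by (simp add: prod_zero_iff)
  have B0: "B \<noteq> 0" unfolding B_def using Suc.prems by (simp add: prod_zero_iff)
  have P1: "(\<Prod>i\<le>Suc k. (x + of_nat i)) = x * A"
    unfolding A_def by (subst prod.atMost_Suc_shift) (simp add: algebra_simps)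
  have P2: "(\<Prod>i\<le>Suc k. (x + of_nat i)) = B * (x + of_nat (Suc k))"
    unfolding B_def by simp
  have fx: "f x = fact k / B" unfolding f_def B_def using Suc.IH[OF Suc.prems] .
  have fx1: "f (x + 1) = fact k / A" unfolding f_def A_def using Suc.IH[OF x1] .
  have "f x - f (x + 1) = fact k * (1 / B - 1 / A)" unfolding fx fx1 by (simp add: algebra_simps)
  also have "1 / B = (x + of_nat (Suc k)) / (x * A)"
  proof -
    have xA: "x * A = B * (x + of_nat (Suc k))" using P1 P2 by simp
    have xk: "x + of_nat (Suc k) \<noteq> 0" using Suc.prems by blast
    show ?thesis unfolding xA using xk B0 by simp
  qed
  also have "1 / A = x / (x * A)" using x0 A0 by simp
  also have "fact k * ((x + of_nat (Suc k)) / (x * A) - x / (x * A)) = fact (Suc k) / (x * A)"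
  proof -
    have "(x + of_nat (Suc k)) / (x * A) - x / (x * A) = of_nat (Suc k) / (x * A)"
      by (simp only: diff_divide_distrib[symmetric] add_diff_cancel_left')
    then show ?thesis by (simp only: fact_Suc times_divide_eq_right mult.commute of_nat_mult)
  qed
  finally show ?case unfolding L P1 .
qed

lemma prod_Suc_fact: "(\<Prod>i\<le>a. (1 + of_nat i :: complex)) = fact (Suc a)"
  by (induction a) (simp_all add: algebra_simps)

lemma fact_prod_shift: "fact m * (\<Prod>i<n. (of_nat m + 1 + of_nat i :: complex)) = fact (m + n)"
proof (induction n)
  case 0 then show ?case by simp
next
  case (Suc n)
  have "fact m * (\<Prod>i<Suc n. (of_nat m + 1 + of_nat i :: complex)) =
        (fact m * (\<Prod>i<n. (of_nat m + 1 + of_nat i :: complex))) * (of_nat m + 1 + of_nat n)"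
    by (simp add: mult_ac)
  also have "\<dots> = fact (m + n) * (of_nat (m + n) + 1)" using Suc.IH by simp
  also have "\<dots> = fact (m + Suc n)" by (simp add: algebra_simps)
  finally show ?case .
qed

definition Jw :: "nat \<Rightarrow> complex" where "Jw i = (-1)^i / (of_nat i + 1)"

lemma neg_pow_split: "l \<le> n \<Longrightarrow> (-1::complex)^(n - l) = (-1)^n * (-1)^l"
proof -
  assume l: "l \<le> n"
  have "(-1::complex)^n = (-1)^(n - l) * (-1)^l" using l by (metis le_add_diff_inverse2 power_add)
  then have "(-1::complex)^n * (-1)^l = (-1)^(n - l) * ((-1)^l * (-1)^l)" by (simp add: mult_ac)
  also have "(-1::complex)^l * (-1)^l = 1" by (simp add: power_mult_distrib[symmetric])
  finally show ?thesis by simp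
qed

lemma pm_pow: "[:-1, 1:] ^ i = (\<Sum>l\<le>i. monom (of_nat (i choose l) * (-1) ^ (i - l)) l :: complex poly)"
  by (rule lin_pow_expand)

lemma Lw_pm_pow: "Lw w ([:-1, 1:] ^ i) = (\<Sum>l\<le>i. of_nat (i choose l) * (-1) ^ (i - l) * w l)"
  unfolding pm_pow Lw_sum Lw_monom ..

context
  fixes w :: "nat \<Rightarrow> complex"
  assumes Srel: "\<And>M. (\<Sum>i<Suc M. (-1)^i * of_nat (Suc M choose i) * w i) = -1 / (of_nat M + 2)"
begin

lemma mshift: "Lw w ([:-1, 1:] ^ i) - w i = (if i = 0 then 1 else 0) - Jw i"
proof (cases i)
  case 0 then show ?thesis by (simp add: Lw_def Jw_def)
next
  case (Suc M)
  have "Lw w ([:-1, 1:] ^ i) = (\<Sum>l<Suc M. of_nat (Suc M choose l) * (-1) ^ (Suc M - l) * w l) + w (Suc M)"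
    unfolding Lw_pm_pow Suc by (simp add: lessThan_Suc_atMost[symmetric])
  also have "(\<Sum>l<Suc M. of_nat (Suc M choose l) * (-1) ^ (Suc M - l) * w l) =
             (-1)^(Suc M) * (\<Sum>l<Suc M. (-1)^l * of_nat (Suc M choose l) * w l)"
    unfolding sum_distrib_left by (rule sum.cong) (auto simp: neg_pow_split)
  also have "\<dots> = (-1)^(Suc M) * (-1 / (of_nat M + 2))" by (simp only: Srel)
  finally show ?thesis unfolding Suc Jw_def by (simp add: field_simps)
qed

lemma shift: "Lw w (pcompose p [:-1, 1:]) - Lw w p = poly p 0 - Lw Jw p"
proof -
  have pX: "pcompose [:0, 1:] [:-1, 1:] = ([:-1, 1:] :: complex poly)"
    by (simp add: pcompose_pCons)
  have pe: "p = (\<Sum>i\<le>degree p. smult (coeff p i) ([:0, 1:] ^ i))"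
    by (simp add: monom_altdef[symmetric] poly_as_sum_of_monoms)
  have pc: "pcompose p [:-1, 1:] = (\<Sum>i\<le>degree p. smult (coeff p i) ([:-1, 1:] ^ i))"
    by (subst pe) (simp only: pcompose_sum pcompose_smult pcompose_pow pX)
  have "Lw w (pcompose p [:-1, 1:]) - Lw w p = (\<Sum>i\<le>degree p. coeff p i * (Lw w ([:-1, 1:] ^ i) - w i))"
    unfolding pc Lw_sum Lw_smult by (simp add: Lw_def sum_subtractf algebra_simps)
  also have "\<dots> = (\<Sum>i\<le>degree p. coeff p i * ((if i = 0 then 1 else 0) - Jw i))"
    by (simp only: mshift)
  also have "\<dots> = (\<Sum>i\<le>degree p. coeff p i * (if i = 0 then 1 else 0)) - Lw Jw p"
    unfolding right_diff_distrib sum_subtractf Lw_def ..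
  also have "(\<Sum>i\<le>degree p. coeff p i * (if i = 0 then 1 else 0)) = (\<Sum>i\<le>degree p. if i = 0 then coeff p i else 0)"
    by (rule sum.cong) auto
  also have "\<dots> = coeff p 0" by simp
  finally show ?thesis by (simp add: poly_0_coeff_0)
qed

end

lemma pX_pow: "[:0, 1:] ^ a = (monom 1 a :: complex poly)"
  by (simp add: monom_altdef)

lemma p1_pow: "[:1, 1:] ^ a = (\<Sum>j\<le>a. monom (of_nat (a choose j)) j :: complex poly)"
  using lin_pow_expand[of "1::complex" a] by simp

lemma pc_p1: "pcompose [:1, 1:] [:-1, 1:] = ([:0, 1:] :: complex poly)"
  by (simp add: pcompose_pCons)

lemma pc_pX: "pcompose [:0, 1:] [:-1, 1:] = ([:-1, 1:] :: complex poly)"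
  by (simp add: pcompose_pCons)

lemma Jw_p1: "Lw Jw ([:1, 1:] ^ a) = 1 / (of_nat a + 1)"
proof -
  have "Lw Jw ([:1, 1:] ^ a) = (\<Sum>j\<le>a. of_nat (a choose j) * (-1)^j / (1 + of_nat j))"
    unfolding p1_pow Lw_sum Lw_monom Jw_def by (simp add: add.commute)
  also have "\<dots> = fact a / (\<Prod>i\<le>a. (1 + of_nat i))"
    by (rule pf) (metis add.commute of_nat_Suc of_nat_neq_0)
  also have "(\<Prod>i\<le>a. (1 + of_nat i :: complex)) = fact (Suc a)" by (rule prod_Suc_fact)
  also have "fact a / (fact (Suc a) :: complex) = 1 / (of_nat a + 1)"
  proof -
    have "fact (Suc a) = (fact a :: complex) * (of_nat a + 1)" by (simp add: algebra_simps)
    then show ?thesis by simp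
  qed
  finally show ?thesis .
qed

lemma uniq:
  fixes u v :: "nat \<Rightarrow> complex"
  assumes "\<And>M. (\<Sum>i<Suc M. (-1)^i * of_nat (Suc M choose i) * u i) = R M"
      and "\<And>M. (\<Sum>i<Suc M. (-1)^i * of_nat (Suc M choose i) * v i) = R M"
  shows "u n = v n"
proof (induction n rule: less_induct)
  case (less n)
  have "(\<Sum>i<n. (-1)^i * of_nat (Suc n choose i) * u i) + (-1)^n * of_nat (Suc n) * u n =
        (\<Sum>i<n. (-1)^i * of_nat (Suc n choose i) * v i) + (-1)^n * of_nat (Suc n) * v n"
    using assms(1)[of n] assms(2)[of n] by simp
  moreover have "(\<Sum>i<n. (-1)^i * of_nat (Suc n choose i) * u i) = (\<Sum>i<n. (-1)^i * of_nat (Suc n choose i) * v i)"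
    using less.IH by simp
  ultimately have "(-1)^n * of_nat (Suc n) * u n = (-1)^n * of_nat (Suc n) * v n" by simp
  then show ?case by (simp del: of_nat_Suc)
qed

context
  fixes w :: "nat \<Rightarrow> complex"
  assumes Srel: "\<And>M. (\<Sum>i<Suc M. (-1)^i * of_nat (Suc M choose i) * w i) = -1 / (of_nat M + 2)"
begin

lemma other: "w a - (\<Sum>j\<le>a. of_nat (a choose j) * w j) = 1 - 1 / (of_nat a + 1)"
proof -
  have "Lw w (pcompose ([:1, 1:] ^ a) [:-1, 1:]) - Lw w ([:1, 1:] ^ a) = poly ([:1, 1:] ^ a :: complex poly) 0 - Lw Jw ([:1, 1:] ^ a)"
    by (rule shift[OF Srel])
  moreover have "pcompose ([:1, 1:] ^ a) [:-1, 1:] = (monom 1 a :: complex poly)"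
    unfolding pcompose_pow pc_p1 pX_pow ..
  moreover have "Lw w ([:1, 1:] ^ a) = (\<Sum>j\<le>a. of_nat (a choose j) * w j)"
    unfolding p1_pow Lw_sum Lw_monom ..
  ultimately show ?thesis by (simp add: Lw_monom Jw_p1)
qed

lemma refl_eq: "w i = - ((-1)^i * w i) - (if i = 0 then 1 else 0)"
proof (rule uniq[where R = "\<lambda>M. -1 / (of_nat M + 2)" and u = w and v = "\<lambda>i. - ((-1)^i * w i) - (if i = 0 then 1 else 0)" and n = i])
  show "(\<Sum>i<Suc M. (-1)^i * of_nat (Suc M choose i) * w i) = -1 / (of_nat M + 2)" for M by (rule Srel)
  fix M
  have o: "(\<Sum>j<Suc M. of_nat (Suc M choose j) * w j) = - 1 + 1 / (of_nat M + 2)"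
  proof -
    have "w (Suc M) - (\<Sum>j\<le>Suc M. of_nat (Suc M choose j) * w j) = 1 - 1 / (of_nat (Suc M) + 1)" by (rule other)
    moreover have "(\<Sum>j\<le>Suc M. of_nat (Suc M choose j) * w j) = (\<Sum>j<Suc M. of_nat (Suc M choose j) * w j) + w (Suc M)"
      by (simp add: lessThan_Suc_atMost[symmetric])
    ultimately show ?thesis by (simp add: algebra_simps)
  qed
  have "(\<Sum>i<Suc M. (-1)^i * of_nat (Suc M choose i) * (- ((-1)^i * w i) - (if i = 0 then 1 else 0))) =
        (\<Sum>i<Suc M. - (of_nat (Suc M choose i) * w i) - (if i = 0 then 1 else 0))"
  proof (rule sum.cong)
    fix i
    have "(-1::complex)^i * (-1)^i = 1" by (simp add: power_mult_distrib[symmetric])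
    then show "(-1)^i * of_nat (Suc M choose i) * (- ((-1)^i * w i) - (if i = 0 then 1 else 0)) =
          - (of_nat (Suc M choose i) * w i) - (if i = 0 then 1 else 0)"
      by (auto simp: algebra_simps)
  qed simp
  also have "\<dots> = - (\<Sum>j<Suc M. of_nat (Suc M choose j) * w j) - 1"
    by (simp add: sum_subtractf sum_negf)
  also have "\<dots> = -1 / (of_nat M + 2)" unfolding o by simp
  finally show "(\<Sum>i<Suc M. (-1)^i * of_nat (Suc M choose i) * (- ((-1)^i * w i) - (if i = 0 then 1 else 0))) = -1 / (of_nat M + 2)" .
qed

lemma w_even_zero: "even i \<Longrightarrow> i \<noteq> 0 \<Longrightarrow> w i = 0"
proof -
  assume i: "even i" "i \<noteq> 0"
  then have "w i = - w i" using refl_eq[of i] by simp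
  then show ?thesis by simp
qed

lemma main_comb:
  assumes k: "k \<ge> 1"
  shows "(\<Sum>j\<le>k. of_nat (k choose j) * w (k + j)) = (-1)^k * fact k / (2 * (\<Prod>i\<le>k. (of_nat k + 1 + of_nat i)))"
proof -
  define P :: "complex poly" where "P = [:0, 1:] ^ k * [:1, 1:] ^ k"
  have Pe: "P = (\<Sum>j\<le>k. monom (of_nat (k choose j)) (k + j))"
    unfolding P_def pX_pow p1_pow sum_distrib_left by (simp add: mult_monom)
  have Qe: "pcompose P [:-1, 1:] = (\<Sum>j\<le>k. monom (of_nat (k choose j) * (-1)^(k - j)) (k + j))"
  proof -
    have "pcompose P [:-1, 1:] = [:0, 1:] ^ k * [:-1, 1:] ^ k"
      unfolding P_def by (simp add: pcompose_mult pcompose_pow pc_p1 pc_pX mult.commute)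
    also have "\<dots> = (\<Sum>j\<le>k. monom (of_nat (k choose j) * (-1)^(k - j)) (k + j))"
      unfolding pX_pow pm_pow sum_distrib_left by (simp add: mult_monom)
    finally show ?thesis .
  qed
  define LP where "LP = (\<Sum>j\<le>k. of_nat (k choose j) * w (k + j))"
  have LPe: "Lw w P = LP" unfolding Pe Lw_sum Lw_monom LP_def ..
  have LQe: "Lw w (pcompose P [:-1, 1:]) = - LP"
  proof -
    have "Lw w (pcompose P [:-1, 1:]) = (\<Sum>j\<le>k. of_nat (k choose j) * (-1)^(k - j) * w (k + j))"
      unfolding Qe Lw_sum Lw_monom ..
    also have "\<dots> = (\<Sum>j\<le>k. - (of_nat (k choose j) * w (k + j)))"
    proof (rule sum.cong)
      fix j assume j: "j \<in> {..k}"
      show "of_nat (k choose j) * (-1)^(k - j) * w (k + j) = - (of_nat (k choose j) * w (k + j))"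
      proof (cases "even (k + j)")
        case True
        then have "w (k + j) = 0" using k by (intro w_even_zero) auto
        then show ?thesis by simp
      next
        case False
        have "(-1::complex)^(k - j) = (-1)^k * (-1)^j" using j by (simp add: neg_pow_split)
        also have "\<dots> = (-1)^(k + j)" by (simp add: power_add)
        also have "\<dots> = -1" using False by simp
        finally show ?thesis by simp
      qed
    qed simp
    finally show ?thesis unfolding LP_def by (simp add: sum_negf)
  qed
  have JPe: "Lw Jw P = (-1)^k * fact k / (\<Prod>i\<le>k. (of_nat k + 1 + of_nat i))"
  proof -
    have "Lw Jw P = (\<Sum>j\<le>k. of_nat (k choose j) * ((-1)^(k + j) / (of_nat (k + j) + 1)))"
      unfolding Pe Lw_sum Lw_monom Jw_def ..
    also have "\<dots> = (-1)^k * (\<Sum>j\<le>k. of_nat (k choose j) * (-1)^j / ((of_nat k + 1) + of_nat j))"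
      unfolding sum_distrib_left by (rule sum.cong) (simp_all add: power_add algebra_simps)
    also have "(\<Sum>j\<le>k. of_nat (k choose j) * (-1)^j / ((of_nat k + 1) + of_nat j) :: complex) = fact k / (\<Prod>i\<le>k. ((of_nat k + 1) + of_nat i))"
      by (rule pf) (metis add.commute add.left_commute of_nat_Suc of_nat_add of_nat_neq_0)
    finally show ?thesis by simp
  qed
  have P0: "poly P 0 = 0" unfolding P_def using k by simp
  have "Lw w (pcompose P [:-1, 1:]) - Lw w P = poly P 0 - Lw Jw P" by (rule shift[OF Srel])
  then have "- LP - LP = - ((-1)^k * fact k / (\<Prod>i\<le>k. (of_nat k + 1 + of_nat i)))"
    unfolding LQe LPe JPe P0 by simp
  moreover define c where "c = (-1)^k * fact k / (\<Prod>i\<le>k. (of_nat k + 1 + of_nat i :: complex))"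
  ultimately have "- LP - LP = - c" by simp
  then have "LP = c / 2" by (simp add: field_simps)
  then show ?thesis unfolding LP_def[symmetric] c_def by simp
qed

end

theorem mainTheorem1:
  fixes k :: nat
  assumes "k \<ge> 1"
  shows "(\<Sum>j = 0..k. of_nat (k choose j) * riemann_zeta (of_int (int j - 2 * int k)))
         = (-1) ^ k / (2 * (2 * of_nat k + 1) * of_nat ((2 * k) choose k))"
proof -
  have z: "riemann_zeta (of_int (int j - 2 * int k)) = zz (2 * k - j)" if j: "j \<le> k" for j
  proof -
    have e: "(of_int (int j - 2 * int k) :: complex) = - of_nat (2 * k - j)"
      using j by (simp add: of_nat_diff)
    have "(- of_nat (2 * k - j) :: complex) \<noteq> 1"
      by (metis add.inverse_inverse add_eq_0_iff of_nat_Suc of_nat_neq_0 add.commute)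
    then show ?thesis unfolding e zz_def by (rule riemann_zeta_eq)
  qed
  have "(\<Sum>j = 0..k. of_nat (k choose j) * riemann_zeta (of_int (int j - 2 * int k))) =
        (\<Sum>j<Suc k. of_nat (k choose j) * zz (2 * k - j))"
    unfolding atLeast0AtMost lessThan_Suc_atMost[symmetric]
  proof (rule sum.cong)
    fix j assume "j \<in> {..<Suc k}"
    then have "j \<le> k" by simp
    then show "of_nat (k choose j) * riemann_zeta (of_int (int j - 2 * int k)) = of_nat (k choose j) * zz (2 * k - j)"
      by (simp only: z)
  qed simp
  also have "\<dots> = (\<Sum>j<Suc k. of_nat (k choose (Suc k - Suc j)) * zz (2 * k - (Suc k - Suc j)))"
    by (rule sum.nat_diff_reindex[symmetric])
  also have "\<dots> = (\<Sum>j\<le>k. of_nat (k choose j) * zz (k + j))"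
    unfolding lessThan_Suc_atMost
  proof (rule sum.cong)
    fix j assume "j \<in> {..k}"
    then have j: "j \<le> k" by simp
    have "k choose (Suc k - Suc j) = k choose j" using j by (simp add: binomial_symmetric[symmetric])
    moreover have "2 * k - (Suc k - Suc j) = k + j" using j by simp
    ultimately show "of_nat (k choose (Suc k - Suc j)) * zz (2 * k - (Suc k - Suc j)) = of_nat (k choose j) * zz (k + j)"
      by simp
  qed simp
  also have "\<dots> = (-1)^k * fact k / (2 * (\<Prod>i\<le>k. (of_nat k + 1 + of_nat i)))"
    by (rule main_comb[OF S_rel assms])
  also have "\<dots> = (-1) ^ k / (2 * (2 * of_nat k + 1) * of_nat ((2 * k) choose k))"
  proof -
    define Y where "Y = (\<Prod>i\<le>k. (of_nat k + 1 + of_nat i :: complex))"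
    have Y1: "fact k * Y = fact (k + Suc k)"
      unfolding Y_def lessThan_Suc_atMost[symmetric] by (rule fact_prod_shift)
    have kk: "k + Suc k = 2 * k + 1" by simp
    have Y: "fact k * Y = fact (2 * k + 1)" using Y1 by (simp only: kk)
    have fk: "(fact k :: complex) \<noteq> 0" by simp
    have Y0: "Y \<noteq> 0" using Y fk by (metis fact_nonzero mult_zero_right)
    have C: "(of_nat ((2 * k) choose k) :: complex) = fact (2 * k) / (fact k * fact k)"
      by (simp add: binomial_fact mult_2)
    have f2: "(fact (2 * k + 1) :: complex) = (2 * of_nat k + 1) * fact (2 * k)"
      by (simp add: algebra_simps)
    have e: "(2 * of_nat k + 1) * fact (2 * k) = (fact k * Y :: complex)" using Y f2 by simp
    have "(2 * of_nat k + 1) * of_nat ((2 * k) choose k) = ((2 * of_nat k + 1) * fact (2 * k)) / (fact k * fact k :: complex)"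
      unfolding C by (simp only: times_divide_eq_right)
    also have "\<dots> = fact k * Y / (fact k * fact k)" unfolding e ..
    also have "\<dots> = Y / fact k" using fk by simp
    finally have h: "(2 * of_nat k + 1) * of_nat ((2 * k) choose k) = (Y / fact k :: complex)" .
    have hD: "2 * (2 * of_nat k + 1) * of_nat ((2 * k) choose k) = (2 * Y / fact k :: complex)"
      by (simp only: mult.assoc h times_divide_eq_right)
    show ?thesis unfolding Y_def[symmetric] hD by (simp only: divide_divide_eq_right mult.commute)
  qed
  finally show ?thesis .
qed

end
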